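(* Let $U$ be a commutative supertropical semiring, $M:=eU$, and $\gamma:M\to N$ a surjective homomorphism onto a bipotent semiring $N$. Let $H=H(U,\gamma)$ be the relation on $U$ given by: $x_1\sim_H x_2$ iff $\gamma(ex_1)=\gamma(ex_2)$ and either $x_1=x_2$, or $x_1,x_2\in M\cup\Sigma_0(U,\gamma)$, or $\gamma(ex_1)=0$. Then $\pi_H:U\to U/H$ is the initial semiring homomorphism covering $\gamma$: $U/H$ (with the supertropical monoid structure making $\pi_H$ a transmission, its ghost ideal identified with $N$) is a supertropical semiring, $\pi_H$ is a semiring homomorphism covering $\gamma$, and for every supertropical semiring $W$ with $eW=N$ and every semiring homomorphism $\beta:U\to W$ covering $\gamma$ there is a unique semiring homomorphism $\eta:U/H\to W$ covering $\mathrm{id}_N$ with $\beta=\eta\circ\pi_H$.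
   Context: A supertropical monoid is a commutative monoid $(U,\cdot)$ with absorbing element $0$ and distinguished idempotent $e$ with $ex=0\Rightarrow x=0$, together with a total ordering on $M:=eU$, compatible with multiplication and with $0$ least, making $M$ a bipotent semiring (addition $=\max$). A supertropical semiring is a supertropical monoid for which the addition $x+y:=y$ if $ex<ey$, $x$ if $ex>ey$, $ex$ if $ex=ey$ is associative and distributive. $\mathcal T(U):=U\setminus eU$. A map $\alpha:U\to V$ covers $\gamma$ if it maps $eU$ to $eV$ and restricts there to $\gamma$. $\Sigma_0(U,\gamma):=\{x\in\mathcal T(U):\exists x_1\in M,\ x_1<ex,\ \gamma(x_1)=\gamma(ex)\neq0\}$. For a TE-relation $E$ (multiplicative equivalence relation, order compatible on $M$, with $ex\sim_E0\Rightarrow x\sim_E0$), $U/E$ carries the unique supertropical monoid structure making $\pi_E$ a transmission (a multiplicative map preserving $0,1,e$ and the order on ghosts). *)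

theory Defs
  imports Main
begin

record 'a stm =
  st_carrier :: "'a set"
  st_mul :: "'a \<Rightarrow> 'a \<Rightarrow> 'a"
  st_one :: 'a
  st_zero :: 'a
  st_e :: 'a
  st_le :: "'a \<Rightarrow> 'a \<Rightarrow> bool"

definition ghosts :: "('a, 'b) stm_scheme \<Rightarrow> 'a set" where
  "ghosts U = st_mul U (st_e U) ` st_carrier U"

definition supertropical_monoid :: "('a, 'b) stm_scheme \<Rightarrow> bool" where
  "supertropical_monoid U \<longleftrightarrow>
     (let C = st_carrier U; m = st_mul U; e = st_e U; le = st_le U; M = ghosts U in
       st_one U \<in> C \<and> st_zero U \<in> C \<and> e \<in> C \<and>
       (\<forall>x\<in>C. \<forall>y\<in>C. m x y \<in> C) \<and>
       (\<forall>x\<in>C. \<forall>y\<in>C. \<forall>z\<in>C. m (m x y) z = m x (m y z)) \<and>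
       (\<forall>x\<in>C. \<forall>y\<in>C. m x y = m y x) \<and>
       (\<forall>x\<in>C. m (st_one U) x = x) \<and>
       (\<forall>x\<in>C. m (st_zero U) x = st_zero U) \<and>
       m e e = e \<and>
       (\<forall>x\<in>C. m e x = st_zero U \<longrightarrow> x = st_zero U) \<and>
       (\<forall>x\<in>M. le x x) \<and>
       (\<forall>x\<in>M. \<forall>y\<in>M. le x y \<and> le y x \<longrightarrow> x = y) \<and>
       (\<forall>x\<in>M. \<forall>y\<in>M. \<forall>z\<in>M. le x y \<and> le y z \<longrightarrow> le x z) \<and>
       (\<forall>x\<in>M. \<forall>y\<in>M. le x y \<or> le y x) \<and>
       (\<forall>x\<in>M. \<forall>y\<in>M. \<forall>z\<in>M. le x y \<longrightarrow> le (m x z) (m y z)) \<and>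
       (\<forall>x\<in>M. le (st_zero U) x))"

definition st_add :: "('a, 'b) stm_scheme \<Rightarrow> 'a \<Rightarrow> 'a \<Rightarrow> 'a" where
  "st_add U x y =
     (let ex = st_mul U (st_e U) x; ey = st_mul U (st_e U) y in
       if ex = ey then ex else if st_le U ex ey then y else x)"

definition supertropical_semiring :: "('a, 'b) stm_scheme \<Rightarrow> bool" where
  "supertropical_semiring U \<longleftrightarrow> supertropical_monoid U \<and>
     (\<forall>x\<in>st_carrier U. \<forall>y\<in>st_carrier U. \<forall>z\<in>st_carrier U.
        st_add U (st_add U x y) z = st_add U x (st_add U y z)) \<and>
     (\<forall>x\<in>st_carrier U. \<forall>y\<in>st_carrier U. \<forall>z\<in>st_carrier U.
        st_mul U x (st_add U y z) = st_add U (st_mul U x y) (st_mul U x z))"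

definition st_semiring_hom :: "('a, 'b) stm_scheme \<Rightarrow> ('c, 'd) stm_scheme \<Rightarrow> ('a \<Rightarrow> 'c) \<Rightarrow> bool" where
  "st_semiring_hom U V f \<longleftrightarrow>
     (\<forall>x\<in>st_carrier U. f x \<in> st_carrier V) \<and>
     f (st_zero U) = st_zero V \<and> f (st_one U) = st_one V \<and>
     (\<forall>x\<in>st_carrier U. \<forall>y\<in>st_carrier U. f (st_mul U x y) = st_mul V (f x) (f y)) \<and>
     (\<forall>x\<in>st_carrier U. \<forall>y\<in>st_carrier U. f (st_add U x y) = st_add V (f x) (f y))"

definition covers :: "('a, 'b) stm_scheme \<Rightarrow> ('c, 'd) stm_scheme \<Rightarrow> ('a \<Rightarrow> 'c) \<Rightarrow> ('a \<Rightarrow> 'c) \<Rightarrow> bool" where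
  "covers U V f g \<longleftrightarrow> (\<forall>x\<in>ghosts U. f x \<in> ghosts V \<and> f x = g x)"

record 'a bsr =
  bs_carrier :: "'a set"
  bs_add :: "'a \<Rightarrow> 'a \<Rightarrow> 'a"
  bs_mul :: "'a \<Rightarrow> 'a \<Rightarrow> 'a"
  bs_zero :: 'a
  bs_one :: 'a

definition bipotent_semiring :: "('a, 'b) bsr_scheme \<Rightarrow> bool" where
  "bipotent_semiring N \<longleftrightarrow>
     (let C = bs_carrier N; a = bs_add N; m = bs_mul N; z = bs_zero N; u = bs_one N in
       z \<in> C \<and> u \<in> C \<and>
       (\<forall>x\<in>C. \<forall>y\<in>C. a x y \<in> C \<and> m x y \<in> C) \<and>
       (\<forall>x\<in>C. \<forall>y\<in>C. \<forall>w\<in>C. a (a x y) w = a x (a y w)) \<and>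
       (\<forall>x\<in>C. \<forall>y\<in>C. a x y = a y x) \<and>
       (\<forall>x\<in>C. a z x = x) \<and>
       (\<forall>x\<in>C. \<forall>y\<in>C. \<forall>w\<in>C. m (m x y) w = m x (m y w)) \<and>
       (\<forall>x\<in>C. m u x = x \<and> m x u = x) \<and>
       (\<forall>x\<in>C. m z x = z \<and> m x z = z) \<and>
       (\<forall>x\<in>C. \<forall>y\<in>C. \<forall>w\<in>C. m x (a y w) = a (m x y) (m x w) \<and> m (a y w) x = a (m y x) (m w x)) \<and>
       (\<forall>x\<in>C. \<forall>y\<in>C. a x y = x \<or> a x y = y))"

definition ghost_hom :: "('a, 'b) stm_scheme \<Rightarrow> ('n, 'c) bsr_scheme \<Rightarrow> ('a \<Rightarrow> 'n) \<Rightarrow> bool" where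
  "ghost_hom U N g \<longleftrightarrow>
     (\<forall>x\<in>ghosts U. g x \<in> bs_carrier N) \<and>
     g (st_zero U) = bs_zero N \<and> g (st_e U) = bs_one N \<and>
     (\<forall>x\<in>ghosts U. \<forall>y\<in>ghosts U. g (st_mul U x y) = bs_mul N (g x) (g y)) \<and>
     (\<forall>x\<in>ghosts U. \<forall>y\<in>ghosts U. g (st_add U x y) = bs_add N (g x) (g y))"

text \<open>eW = N, as bipotent semirings (literal identification).\<close>
definition ghost_ideal_is :: "('n, 'b) stm_scheme \<Rightarrow> ('n, 'c) bsr_scheme \<Rightarrow> bool" where
  "ghost_ideal_is W N \<longleftrightarrow>
     ghosts W = bs_carrier N \<and> st_zero W = bs_zero N \<and> st_e W = bs_one N \<and>
     (\<forall>a\<in>bs_carrier N. \<forall>b\<in>bs_carrier N.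
        st_mul W a b = bs_mul N a b \<and> st_add W a b = bs_add N a b)"

definition Sigma0 :: "('a, 'b) stm_scheme \<Rightarrow> ('n, 'c) bsr_scheme \<Rightarrow> ('a \<Rightarrow> 'n) \<Rightarrow> 'a set" where
  "Sigma0 U N g = {x \<in> st_carrier U - ghosts U.
     \<exists>x1\<in>ghosts U. st_le U x1 (st_mul U (st_e U) x) \<and> x1 \<noteq> st_mul U (st_e U) x \<and>
        g x1 = g (st_mul U (st_e U) x) \<and> g (st_mul U (st_e U) x) \<noteq> bs_zero N}"

definition Hrel :: "('a, 'b) stm_scheme \<Rightarrow> ('n, 'c) bsr_scheme \<Rightarrow> ('a \<Rightarrow> 'n) \<Rightarrow> 'a rel" where
  "Hrel U N g = {(x1, x2). x1 \<in> st_carrier U \<and> x2 \<in> st_carrier U \<and>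
     g (st_mul U (st_e U) x1) = g (st_mul U (st_e U) x2) \<and>
     (x1 = x2 \<or>
      (x1 \<in> ghosts U \<union> Sigma0 U N g \<and> x2 \<in> ghosts U \<union> Sigma0 U N g) \<or>
      g (st_mul U (st_e U) x1) = bs_zero N)}"

definition proj :: "'a rel \<Rightarrow> 'a \<Rightarrow> 'a set" where
  "proj E x = E `` {x}"

definition quot_stm :: "('a, 'b) stm_scheme \<Rightarrow> 'a rel \<Rightarrow> 'a set stm" where
  "quot_stm U E =
     \<lparr> st_carrier = st_carrier U // E,
       st_mul = (\<lambda>X Y. E `` {st_mul U (SOME x. x \<in> X) (SOME y. y \<in> Y)}),
       st_one = E `` {st_one U},
       st_zero = E `` {st_zero U},
       st_e = E `` {st_e U},
       st_le = (\<lambda>X Y. \<exists>x\<in>X. \<exists>y\<in>Y. x \<in> ghosts U \<and> y \<in> ghosts U \<and> st_le U x y) \<rparr>"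

text \<open>Identification of the ghost ideal of U/H with N: a ghost class [x] (x in M) is sent
  to gamma(x).\<close>
definition qiota :: "('a, 'b) stm_scheme \<Rightarrow> ('a \<Rightarrow> 'n) \<Rightarrow> 'a set \<Rightarrow> 'n" where
  "qiota U g X = g (SOME x. x \<in> X \<and> x \<in> ghosts U)"

end

theory Submission imports Defs begin

context
  fixes U :: "('a,'b) stm_scheme"
  assumes S: "supertropical_monoid U"
begin

lemma p_one: "st_one U \<in> st_carrier U"
  using S[unfolded supertropical_monoid_def Let_def] by (elim conjE) assumption
lemma p_zero: "st_zero U \<in> st_carrier U"
  using S[unfolded supertropical_monoid_def Let_def] by (elim conjE) assumption
lemma p_e: "st_e U \<in> st_carrier U"
  using S[unfolded supertropical_monoid_def Let_def] by (elim conjE) assumption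
lemma p_mul: "\<forall>x\<in>st_carrier U. \<forall>y\<in>st_carrier U. st_mul U x y \<in> st_carrier U"
  using S[unfolded supertropical_monoid_def Let_def] by (elim conjE) assumption
lemma p_assoc: "\<forall>x\<in>st_carrier U. \<forall>y\<in>st_carrier U. \<forall>z\<in>st_carrier U. st_mul U (st_mul U x y) z = st_mul U x (st_mul U y z)"
  using S[unfolded supertropical_monoid_def Let_def] by (elim conjE) assumption
lemma p_comm: "\<forall>x\<in>st_carrier U. \<forall>y\<in>st_carrier U. st_mul U x y = st_mul U y x"
  using S[unfolded supertropical_monoid_def Let_def] by (elim conjE) assumption
lemma p_onel: "\<forall>x\<in>st_carrier U. st_mul U (st_one U) x = x"
  using S[unfolded supertropical_monoid_def Let_def] by (elim conjE) assumption
lemma p_zerol: "\<forall>x\<in>st_carrier U. st_mul U (st_zero U) x = st_zero U"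
  using S[unfolded supertropical_monoid_def Let_def] by (elim conjE) assumption
lemma p_ee: "st_mul U (st_e U) (st_e U) = st_e U"
  using S[unfolded supertropical_monoid_def Let_def] by (elim conjE) assumption
lemma p_ez: "\<forall>x\<in>st_carrier U. st_mul U (st_e U) x = st_zero U \<longrightarrow> x = st_zero U"
  using S[unfolded supertropical_monoid_def Let_def] by (elim conjE) assumption
lemma p_refl: "\<forall>x\<in>ghosts U. st_le U x x"
  using S[unfolded supertropical_monoid_def Let_def] by (elim conjE) assumption
lemma p_anti: "\<forall>x\<in>ghosts U. \<forall>y\<in>ghosts U. st_le U x y \<and> st_le U y x \<longrightarrow> x = y"
  using S[unfolded supertropical_monoid_def Let_def] by (elim conjE) assumption
lemma p_trans: "\<forall>x\<in>ghosts U. \<forall>y\<in>ghosts U. \<forall>z\<in>ghosts U. st_le U x y \<and> st_le U y z \<longrightarrow> st_le U x z"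
  using S[unfolded supertropical_monoid_def Let_def] by (elim conjE) assumption
lemma p_total: "\<forall>x\<in>ghosts U. \<forall>y\<in>ghosts U. st_le U x y \<or> st_le U y x"
  using S[unfolded supertropical_monoid_def Let_def] by (elim conjE) assumption
lemma p_mono: "\<forall>x\<in>ghosts U. \<forall>y\<in>ghosts U. \<forall>z\<in>ghosts U. st_le U x y \<longrightarrow> st_le U (st_mul U x z) (st_mul U y z)"
  using S[unfolded supertropical_monoid_def Let_def] by (elim conjE) assumption
lemma p_le0: "\<forall>x\<in>ghosts U. st_le U (st_zero U) x"
  using S[unfolded supertropical_monoid_def Let_def] by (elim conjE) assumption
lemma sm_one: "st_one U \<in> st_carrier U"
  using p_one by blast
lemma sm_zero: "st_zero U \<in> st_carrier U"
  using p_zero by blast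
lemma sm_e: "st_e U \<in> st_carrier U"
  using p_e by blast
lemma sm_mul: "x \<in> st_carrier U \<Longrightarrow> y \<in> st_carrier U \<Longrightarrow> st_mul U x y \<in> st_carrier U"
  using p_mul by blast
lemma sm_assoc: "x \<in> st_carrier U \<Longrightarrow> y \<in> st_carrier U \<Longrightarrow> z \<in> st_carrier U \<Longrightarrow> st_mul U (st_mul U x y) z = st_mul U x (st_mul U y z)"
  using p_assoc by blast
lemma sm_comm: "x \<in> st_carrier U \<Longrightarrow> y \<in> st_carrier U \<Longrightarrow> st_mul U x y = st_mul U y x"
  using p_comm by blast
lemma sm_onel: "x \<in> st_carrier U \<Longrightarrow> st_mul U (st_one U) x = x"
  using p_onel by blast
lemma sm_zerol: "x \<in> st_carrier U \<Longrightarrow> st_mul U (st_zero U) x = st_zero U"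
  using p_zerol by blast
lemma sm_ee: "st_mul U (st_e U) (st_e U) = st_e U"
  using p_ee by blast
lemma sm_ez: "x \<in> st_carrier U \<Longrightarrow> st_mul U (st_e U) x = st_zero U \<Longrightarrow> x = st_zero U"
  using p_ez by blast
lemma sm_refl: "x \<in> ghosts U \<Longrightarrow> st_le U x x"
  using p_refl by blast
lemma sm_anti: "x \<in> ghosts U \<Longrightarrow> y \<in> ghosts U \<Longrightarrow> st_le U x y \<Longrightarrow> st_le U y x \<Longrightarrow> x = y"
  using p_anti by blast
lemma sm_trans: "x \<in> ghosts U \<Longrightarrow> y \<in> ghosts U \<Longrightarrow> z \<in> ghosts U \<Longrightarrow> st_le U x y \<Longrightarrow> st_le U y z \<Longrightarrow> st_le U x z"
  using p_trans by blast
lemma sm_total: "x \<in> ghosts U \<Longrightarrow> y \<in> ghosts U \<Longrightarrow> st_le U x y \<or> st_le U y x"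
  using p_total by blast
lemma sm_mono: "x \<in> ghosts U \<Longrightarrow> y \<in> ghosts U \<Longrightarrow> z \<in> ghosts U \<Longrightarrow> st_le U x y \<Longrightarrow> st_le U (st_mul U x z) (st_mul U y z)"
  using p_mono by blast
lemma sm_le0: "x \<in> ghosts U \<Longrightarrow> st_le U (st_zero U) x"
  using p_le0 by blast

lemma sm_ghC: "x \<in> ghosts U \<Longrightarrow> x \<in> st_carrier U"
  unfolding ghosts_def using sm_mul sm_e by auto
lemma sm_ghI: "x \<in> st_carrier U \<Longrightarrow> st_mul U (st_e U) x \<in> ghosts U"
  unfolding ghosts_def by auto
lemma sm_ghe: "x \<in> ghosts U \<Longrightarrow> st_mul U (st_e U) x = x"
  unfolding ghosts_def using sm_assoc[symmetric] sm_ee sm_e by auto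
lemma sm_ghmul: "x \<in> ghosts U \<Longrightarrow> y \<in> st_carrier U \<Longrightarrow> st_mul U x y \<in> ghosts U"
  unfolding ghosts_def using sm_assoc sm_e by (auto intro!: image_eqI sm_mul)
lemma sm_ghmul2: "x \<in> st_carrier U \<Longrightarrow> y \<in> ghosts U \<Longrightarrow> st_mul U x y \<in> ghosts U"
  using sm_ghmul sm_comm sm_ghC by metis
lemma sm_zero_gh: "st_zero U \<in> ghosts U"
  using sm_ghI[OF sm_zero] sm_comm[OF sm_e sm_zero] sm_zerol[OF sm_e] by simp
lemma sm_e_gh: "st_e U \<in> ghosts U"
  using sm_ghI[OF sm_e] sm_ee by simp
lemma sm_emul: "x \<in> st_carrier U \<Longrightarrow> y \<in> st_carrier U \<Longrightarrow>
   st_mul U (st_e U) (st_mul U x y) = st_mul U (st_mul U (st_e U) x) (st_mul U (st_e U) y)"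
proof -
  assume x: "x \<in> st_carrier U" and y: "y \<in> st_carrier U"
  have "st_mul U (st_mul U (st_e U) x) (st_mul U (st_e U) y) = st_mul U (st_e U) (st_mul U x (st_mul U (st_e U) y))"
    using x y sm_e by (simp add: sm_assoc sm_mul)
  also have "st_mul U x (st_mul U (st_e U) y) = st_mul U (st_e U) (st_mul U x y)"
    using x y sm_e by (metis sm_assoc sm_comm)
  also have "st_mul U (st_e U) (st_mul U (st_e U) (st_mul U x y)) = st_mul U (st_e U) (st_mul U x y)"
    using x y sm_e by (simp add: sm_assoc[symmetric] sm_mul sm_ee)
  finally show ?thesis by simp
qed

lemma sm_add_C: "x \<in> st_carrier U \<Longrightarrow> y \<in> st_carrier U \<Longrightarrow> st_add U x y \<in> st_carrier U"
  unfolding st_add_def Let_def using sm_mul sm_e by auto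
lemma sm_add_gh: "x \<in> ghosts U \<Longrightarrow> y \<in> ghosts U \<Longrightarrow>
   st_add U x y = (if x = y then x else if st_le U x y then y else x)"
  unfolding st_add_def Let_def using sm_ghe by auto
lemma sm_add_gh2: "x \<in> ghosts U \<Longrightarrow> y \<in> ghosts U \<Longrightarrow> st_add U x y \<in> ghosts U"
  using sm_add_gh by auto
lemma sm_add_eq: "x \<in> st_carrier U \<Longrightarrow> y \<in> st_carrier U \<Longrightarrow>
   st_mul U (st_e U) x = st_mul U (st_e U) y \<Longrightarrow> st_add U x y = st_mul U (st_e U) x"
  unfolding st_add_def Let_def by auto
end

locale ctx =
  fixes U :: "'a stm" and N :: "'n bsr" and g :: "'a \<Rightarrow> 'n"
  assumes sr: "supertropical_semiring U" and bp: "bipotent_semiring N"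
    and gh: "ghost_hom U N g" and gsurj: "g ` ghosts U = bs_carrier N"
begin

abbreviation "UC \<equiv> st_carrier U"
abbreviation "UM \<equiv> ghosts U"
abbreviation "mm \<equiv> st_mul U"
abbreviation "ue \<equiv> st_e U"
abbreviation "H \<equiv> Hrel U N g"
abbreviation "cls x \<equiv> H `` {x}"
abbreviation "Q \<equiv> quot_stm U H"
abbreviation "Sg \<equiv> Sigma0 U N g"

lemma S: "supertropical_monoid U" using sr unfolding supertropical_semiring_def by auto
lemma U_distr: "x \<in> UC \<Longrightarrow> y \<in> UC \<Longrightarrow> z \<in> UC \<Longrightarrow> mm x (st_add U y z) = st_add U (mm x y) (mm x z)"
  using sr unfolding supertropical_semiring_def by auto
lemma U_assoc: "x \<in> UC \<Longrightarrow> y \<in> UC \<Longrightarrow> z \<in> UC \<Longrightarrow> st_add U (st_add U x y) z = st_add U x (st_add U y z)"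
  using sr unfolding supertropical_semiring_def by auto

lemmas sm = sm_one[OF S] sm_zero[OF S] sm_e[OF S] sm_mul[OF S] sm_ghC[OF S] sm_ghI[OF S]
  sm_ghmul[OF S] sm_ghmul2[OF S] sm_zero_gh[OF S] sm_e_gh[OF S] sm_add_C[OF S] sm_add_gh2[OF S]

lemma N_add_comm: "p \<in> bs_carrier N \<Longrightarrow> q \<in> bs_carrier N \<Longrightarrow> bs_add N p q = bs_add N q p"
  using bp unfolding bipotent_semiring_def Let_def by auto

lemma g_C: "a \<in> UM \<Longrightarrow> g a \<in> bs_carrier N" using gh unfolding ghost_hom_def by auto
lemma g_zero: "g (st_zero U) = bs_zero N" using gh unfolding ghost_hom_def by auto
lemma g_e: "g ue = bs_one N" using gh unfolding ghost_hom_def by auto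
lemma g_mul: "a \<in> UM \<Longrightarrow> b \<in> UM \<Longrightarrow> g (mm a b) = bs_mul N (g a) (g b)" using gh unfolding ghost_hom_def by auto
lemma g_add: "a \<in> UM \<Longrightarrow> b \<in> UM \<Longrightarrow> g (st_add U a b) = bs_add N (g a) (g b)" using gh unfolding ghost_hom_def by auto

lemma g_mono: "a \<in> UM \<Longrightarrow> b \<in> UM \<Longrightarrow> st_le U a b \<Longrightarrow> bs_add N (g a) (g b) = g b"
  using g_add sm_add_gh[OF S] by (metis)

lemma g_strict: "a \<in> UM \<Longrightarrow> b \<in> UM \<Longrightarrow> g a \<noteq> g b \<Longrightarrow> bs_add N (g a) (g b) = g b \<Longrightarrow> st_le U a b"
  using g_mono sm_total[OF S] N_add_comm g_C by metis

lemma ge_eq: "x \<in> UC \<Longrightarrow> g (mm ue (mm ue x)) = g (mm ue x)"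
  using sm_ghe[OF S] sm_ghI[OF S] by simp

lemma H_iff: "(x1, x2) \<in> H \<longleftrightarrow> x1 \<in> UC \<and> x2 \<in> UC \<and>
     g (mm ue x1) = g (mm ue x2) \<and>
     (x1 = x2 \<or> (x1 \<in> UM \<union> Sg \<and> x2 \<in> UM \<union> Sg) \<or> g (mm ue x1) = bs_zero N)"
  unfolding Hrel_def by auto

lemma H_equiv: "equiv UC H"
proof (rule equivI)
  show "refl_on UC H" unfolding refl_on_def using H_iff by (auto simp: Hrel_def)
  show "sym H" unfolding sym_def using H_iff by metis
  show "trans H" unfolding trans_def using H_iff by metis
  show "H \<subseteq> UC \<times> UC" using H_iff by auto
qed

lemma sig_wit: "x \<in> UC \<Longrightarrow> a \<in> UM \<Longrightarrow> st_le U a (mm ue x) \<Longrightarrow> a \<noteq> mm ue x \<Longrightarrow> st_add U x a = x"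
  unfolding st_add_def Let_def using sm_ghe[OF S] sm_anti[OF S] sm_ghI[OF S] by metis

lemma ghost_absorb: "a \<in> UM \<Longrightarrow> z \<in> UC \<Longrightarrow> mm a (mm ue z) = mm a z"
proof -
  assume a: "a \<in> UM" and z: "z \<in> UC"
  have "mm a z = mm ue (mm a z)" using sm_ghe[OF S] sm a z by metis
  also have "\<dots> = mm (mm ue a) (mm ue z)" using sm_emul[OF S] sm a z by metis
  also have "\<dots> = mm a (mm ue z)" using sm_ghe[OF S] a by simp
  finally show ?thesis by simp
qed

lemma sig_mul:
  assumes x1: "x1 \<in> Sg" and z: "z \<in> UC"
  shows "mm x1 z \<in> UM \<union> Sg \<or> g (mm ue (mm x1 z)) = bs_zero N"
proof -
  from x1 obtain a where x1C: "x1 \<in> UC" and a: "a \<in> UM" and le: "st_le U a (mm ue x1)"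
    and ne: "a \<noteq> mm ue x1" and ga: "g a = g (mm ue x1)" and nz: "g (mm ue x1) \<noteq> bs_zero N"
    unfolding Sigma0_def by auto
  define b where "b = mm a (mm ue z)"
  define G where "G = mm ue (mm x1 z)"
  have ez: "mm ue z \<in> UM" using sm z by auto
  have ex1: "mm ue x1 \<in> UM" using sm x1C by auto
  have bM: "b \<in> UM" unfolding b_def using sm a ez by auto
  have G2: "G = mm (mm ue x1) (mm ue z)" unfolding G_def using sm_emul[OF S] x1C z by simp
  have GM: "G \<in> UM" unfolding G_def using sm x1C z by auto
  have leb: "st_le U b G" unfolding b_def G2 using sm_mono[OF S a ex1 ez le] .
  have gb: "g b = g G" unfolding b_def G2 using g_mul a ez ex1 ga by simp
  show ?thesis
  proof (cases "b = G")
    case True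
    have "mm z (st_add U x1 a) = st_add U (mm z x1) (mm z a)"
      using U_distr z x1C sm a by auto
    hence e1: "mm z x1 = st_add U (mm z x1) (mm z a)" using sig_wit[OF x1C a le ne] by simp
    have za: "mm z a = b" unfolding b_def using ghost_absorb[OF a z] sm_comm[OF S] z sm a by metis
    have "mm ue (mm z a) = G" using za True sm_ghe[OF S] bM by simp
    moreover have "mm ue (mm z x1) = G" unfolding G_def using sm_comm[OF S] z x1C by metis
    ultimately have "st_add U (mm z x1) (mm z a) = G"
      using sm_add_eq[OF S] sm z x1C a by (metis)
    hence "mm x1 z = G" using e1 sm_comm[OF S] z x1C by metis
    thus ?thesis using GM by simp
  next
    case False
    show ?thesis
    proof (cases "mm x1 z \<in> UM \<or> g G = bs_zero N")
      case True thus ?thesis unfolding G_def by auto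
    next
      case F2: False
      have "mm x1 z \<in> Sg" unfolding Sigma0_def
        using F2 bM leb False gb sm x1C z unfolding G_def by auto
      thus ?thesis by simp
    qed
  qed
qed

lemma cong1:
  assumes h: "(x1, x2) \<in> H" and z: "z \<in> UC"
  shows "(mm x1 z, mm x2 z) \<in> H"
proof -
  have x1: "x1 \<in> UC" and x2: "x2 \<in> UC" and geq: "g (mm ue x1) = g (mm ue x2)"
    using h H_iff by auto
  have gp: "g (mm ue (mm x z)) = bs_mul N (g (mm ue x)) (g (mm ue z))" if "x \<in> UC" for x
    using sm_emul[OF S] g_mul sm that z by metis
  have g2: "g (mm ue (mm x1 z)) = g (mm ue (mm x2 z))" using gp x1 x2 geq by simp
  have C2: "mm x1 z \<in> UC" "mm x2 z \<in> UC" using sm x1 x2 z by auto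
  have P: "mm x z \<in> UM \<union> Sg \<or> g (mm ue (mm x z)) = bs_zero N" if "x \<in> UM \<union> Sg" for x
    using that sig_mul[OF _ z] sm z by auto
  from h consider "x1 = x2" | "x1 \<in> UM \<union> Sg" "x2 \<in> UM \<union> Sg" | "g (mm ue x1) = bs_zero N"
    using H_iff by auto
  thus ?thesis
  proof cases
    case 1 thus ?thesis using C2 H_iff by auto
  next
    case 2
    thus ?thesis using P[of x1] P[of x2] g2 C2 H_iff by metis
  next
    case 3
    have "bs_mul N (bs_zero N) (g (mm ue z)) = bs_zero N"
      using bp g_C sm z unfolding bipotent_semiring_def Let_def by auto
    thus ?thesis using 3 gp[OF x1] g2 C2 H_iff by metis
  qed
qed

lemma cong2:
  assumes "(x1, x2) \<in> H" "(y1, y2) \<in> H"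
  shows "(mm x1 y1, mm x2 y2) \<in> H"
proof -
  have C: "x1 \<in> UC" "x2 \<in> UC" "y1 \<in> UC" "y2 \<in> UC" using assms H_iff by auto
  have "(mm x1 y1, mm x2 y1) \<in> H" using cong1 assms C by auto
  moreover have "(mm y1 x2, mm y2 x2) \<in> H" using cong1 assms C by auto
  hence "(mm x2 y1, mm x2 y2) \<in> H" using sm_comm[OF S] C by metis
  ultimately show ?thesis using H_equiv unfolding equiv_def trans_def by blast
qed

lemma cls_eq: "x \<in> UC \<Longrightarrow> y \<in> UC \<Longrightarrow> cls x = cls y \<longleftrightarrow> (x, y) \<in> H"
  using equiv_class_eq_iff[OF H_equiv] by auto

lemma cls_in: "x \<in> UC \<Longrightarrow> cls x \<in> UC // H" by (rule quotientI)
lemma cls_self: "x \<in> UC \<Longrightarrow> x \<in> cls x" using equiv_class_self[OF H_equiv] by auto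

lemma rep: "x \<in> UC \<Longrightarrow> (x, SOME y. y \<in> cls x) \<in> H"
proof -
  assume x: "x \<in> UC"
  have "(SOME y. y \<in> cls x) \<in> cls x" using cls_self[OF x] by (rule someI)
  thus ?thesis by simp
qed

lemma Q_carrier: "st_carrier Q = UC // H" by (simp add: quot_stm_def)
lemma Q_one: "st_one Q = cls (st_one U)" by (simp add: quot_stm_def)
lemma Q_zero: "st_zero Q = cls (st_zero U)" by (simp add: quot_stm_def)
lemma Q_e: "st_e Q = cls ue" by (simp add: quot_stm_def)

lemma Q_mul: "x \<in> UC \<Longrightarrow> y \<in> UC \<Longrightarrow> st_mul Q (cls x) (cls y) = cls (mm x y)"
proof -
  assume x: "x \<in> UC" and y: "y \<in> UC"
  have "(mm x y, mm (SOME a. a \<in> cls x) (SOME b. b \<in> cls y)) \<in> H"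
    using cong2 rep x y by blast
  moreover have "mm x y \<in> UC" using sm x y by auto
  ultimately have "cls (mm (SOME a. a \<in> cls x) (SOME b. b \<in> cls y)) = cls (mm x y)"
    using cls_eq H_iff by metis
  thus ?thesis by (simp add: quot_stm_def)
qed

lemma Q_cases: "X \<in> UC // H \<Longrightarrow> (\<And>x. x \<in> UC \<Longrightarrow> X = cls x \<Longrightarrow> P) \<Longrightarrow> P"
  by (erule quotientE) auto

lemma Q_ghosts: "ghosts Q = cls ` UM"
proof -
  have "ghosts Q = (\<lambda>X. st_mul Q (cls ue) X) ` (UC // H)"
    unfolding ghosts_def Q_carrier Q_e ..
  also have "\<dots> = (\<lambda>x. cls (mm ue x)) ` UC"
  proof
    show "(\<lambda>X. st_mul Q (cls ue) X) ` (UC // H) \<subseteq> (\<lambda>x. cls (mm ue x)) ` UC"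
      using Q_mul sm by (auto elim!: Q_cases)
    show "(\<lambda>x. cls (mm ue x)) ` UC \<subseteq> (\<lambda>X. st_mul Q (cls ue) X) ` (UC // H)"
    proof
      fix Y assume "Y \<in> (\<lambda>x. cls (mm ue x)) ` UC"
      then obtain x where x: "x \<in> UC" "Y = cls (mm ue x)" by auto
      hence "Y = st_mul Q (cls ue) (cls x)" using Q_mul sm by simp
      thus "Y \<in> (\<lambda>X. st_mul Q (cls ue) X) ` (UC // H)" using cls_in x by blast
    qed
  qed
  also have "\<dots> = cls ` UM" unfolding ghosts_def by (simp add: image_image)
  finally show ?thesis .
qed

lemma gh_cls: "a \<in> UM \<Longrightarrow> b \<in> UM \<Longrightarrow> cls a = cls b \<longleftrightarrow> g a = g b"
  using cls_eq H_iff sm_ghe[OF S] sm by auto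

lemma gh_mem: "a \<in> UM \<Longrightarrow> x \<in> cls a \<Longrightarrow> x \<in> UM \<Longrightarrow> g x = g a"
  using H_iff sm_ghe[OF S] by auto

lemma Q_le: "a \<in> UM \<Longrightarrow> b \<in> UM \<Longrightarrow> st_le Q (cls a) (cls b) \<longleftrightarrow> bs_add N (g a) (g b) = g b"
proof
  assume a: "a \<in> UM" and b: "b \<in> UM" and "st_le Q (cls a) (cls b)"
  then obtain x y where "x \<in> cls a" "y \<in> cls b" "x \<in> UM" "y \<in> UM" "st_le U x y"
    by (auto simp: quot_stm_def)
  thus "bs_add N (g a) (g b) = g b" using gh_mem a b g_mono by metis
next
  assume a: "a \<in> UM" and b: "b \<in> UM" and h: "bs_add N (g a) (g b) = g b"
  show "st_le Q (cls a) (cls b)"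
  proof (cases "g a = g b")
    case True
    hence ab: "a \<in> cls b" using gh_cls a b cls_self sm by metis
    have aa: "a \<in> cls a" using cls_self sm a by auto
    have "st_le U a a" using sm_refl[OF S a] .
    thus ?thesis unfolding quot_stm_def using aa ab a by (simp only: stm.simps) blast
  next
    case False
    hence "st_le U a b" using g_strict a b h by auto
    moreover have "a \<in> cls a" "b \<in> cls b" using cls_self sm a b by auto
    ultimately show ?thesis unfolding quot_stm_def using a b by (simp only: stm.simps) blast
  qed
qed

lemma Lp: "x \<in> UC \<Longrightarrow> a \<in> UM \<Longrightarrow> st_le U a (mm ue x) \<Longrightarrow> a \<noteq> mm ue x \<Longrightarrow> g a = g (mm ue x)
  \<Longrightarrow> (mm ue x, x) \<in> H"
proof -
  assume x: "x \<in> UC" and a: "a \<in> UM" and le: "st_le U a (mm ue x)" and ne: "a \<noteq> mm ue x"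
    and ga: "g a = g (mm ue x)"
  have ex: "mm ue x \<in> UM" using sm x by auto
  have g1: "g (mm ue (mm ue x)) = g (mm ue x)" using ge_eq x by simp
  show ?thesis
  proof (cases "g (mm ue x) = bs_zero N")
    case True thus ?thesis using g1 H_iff x ex sm by auto
  next
    case False
    have "x \<in> UM \<union> Sg" using x a le ne ga False unfolding Sigma0_def by auto
    thus ?thesis using g1 H_iff x ex sm by auto
  qed
qed

lemma Q_add: "x \<in> UC \<Longrightarrow> y \<in> UC \<Longrightarrow> st_add Q (cls x) (cls y) = cls (st_add U x y)"
proof -
  assume x: "x \<in> UC" and y: "y \<in> UC"
  define A where "A = mm ue x"
  define B where "B = mm ue y"
  have AM: "A \<in> UM" and BM: "B \<in> UM" unfolding A_def B_def using sm x y by auto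
  have lhs: "st_add Q (cls x) (cls y) = (if cls A = cls B then cls A else if st_le Q (cls A) (cls B) then cls y else cls x)"
    unfolding st_add_def Let_def Q_e A_def B_def using Q_mul x y sm by simp
  have rhs: "st_add U x y = (if A = B then A else if st_le U A B then y else x)"
    unfolding st_add_def Let_def A_def B_def by simp
  show ?thesis
  proof (cases "g A = g B")
    case True
    hence cAB: "cls A = cls B" using gh_cls AM BM by auto
    show ?thesis
    proof (cases "A = B")
      case True thus ?thesis using lhs rhs cAB by simp
    next
      case ne: False
      show ?thesis
      proof (cases "st_le U A B")
        case True
        have "(B, y) \<in> H" using Lp[OF y AM] True ne \<open>g A = g B\<close> unfolding B_def by auto
        hence "cls y = cls B" using cls_eq y sm BM by (metis H_iff)
        thus ?thesis using lhs rhs cAB True ne by simp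
      next
        case False
        hence le: "st_le U B A" using sm_total[OF S] AM BM by auto
        have "(A, x) \<in> H" using Lp[OF x BM] le ne \<open>g A = g B\<close> unfolding A_def by auto
        hence "cls x = cls A" using cls_eq x sm AM by (metis H_iff)
        thus ?thesis using lhs rhs cAB False ne by simp
      qed
    qed
  next
    case False
    hence cAB: "cls A \<noteq> cls B" and AB: "A \<noteq> B" using gh_cls AM BM by auto
    have "st_le Q (cls A) (cls B) \<longleftrightarrow> st_le U A B"
      using Q_le[OF AM BM] g_mono[OF AM BM] g_strict[OF AM BM False] by auto
    thus ?thesis using lhs rhs cAB AB by simp
  qed
qed

lemma Q_zero_iff: "x \<in> UC \<Longrightarrow> cls x = cls (st_zero U) \<longleftrightarrow> g (mm ue x) = bs_zero N"
proof -
  assume x: "x \<in> UC"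
  have "g (mm ue (st_zero U)) = bs_zero N" using sm_ghe[OF S] sm g_zero by simp
  thus ?thesis using cls_eq[OF x] sm H_iff x by auto
qed

lemma iota_cls: "a \<in> UM \<Longrightarrow> qiota U g (cls a) = g a"
proof -
  assume a: "a \<in> UM"
  have "(SOME x. x \<in> cls a \<and> x \<in> UM) \<in> cls a \<and> (SOME x. x \<in> cls a \<and> x \<in> UM) \<in> UM"
    by (rule someI[of _ a]) (use a cls_self sm in auto)
  thus ?thesis unfolding qiota_def using gh_mem a by auto
qed

end

context ctx begin

lemma N_facts:
  "p \<in> bs_carrier N \<Longrightarrow> q \<in> bs_carrier N \<Longrightarrow> bs_add N p q \<in> bs_carrier N"
  "p \<in> bs_carrier N \<Longrightarrow> q \<in> bs_carrier N \<Longrightarrow> bs_mul N p q \<in> bs_carrier N"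
  "p \<in> bs_carrier N \<Longrightarrow> q \<in> bs_carrier N \<Longrightarrow> r \<in> bs_carrier N \<Longrightarrow> bs_add N (bs_add N p q) r = bs_add N p (bs_add N q r)"
  "p \<in> bs_carrier N \<Longrightarrow> bs_add N (bs_zero N) p = p"
  "p \<in> bs_carrier N \<Longrightarrow> q \<in> bs_carrier N \<Longrightarrow> bs_add N p q = p \<or> bs_add N p q = q"
  "p \<in> bs_carrier N \<Longrightarrow> q \<in> bs_carrier N \<Longrightarrow> r \<in> bs_carrier N \<Longrightarrow> bs_mul N (bs_add N p q) r = bs_add N (bs_mul N p r) (bs_mul N q r)"
  using bp unfolding bipotent_semiring_def Let_def by auto

lemma Q_mon: "supertropical_monoid Q"
proof -
  have f1: "st_one Q \<in> st_carrier Q" "st_zero Q \<in> st_carrier Q" "st_e Q \<in> st_carrier Q"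
    unfolding Q_one Q_zero Q_e Q_carrier using sm cls_in by auto
  have f2: "\<forall>X\<in>st_carrier Q. \<forall>Y\<in>st_carrier Q. st_mul Q X Y \<in> st_carrier Q"
    unfolding Q_carrier by (auto elim!: Q_cases simp: Q_mul sm intro!: cls_in)
  have f3: "\<forall>X\<in>st_carrier Q. \<forall>Y\<in>st_carrier Q. \<forall>Z\<in>st_carrier Q. st_mul Q (st_mul Q X Y) Z = st_mul Q X (st_mul Q Y Z)"
    unfolding Q_carrier by (auto elim!: Q_cases simp: Q_mul sm sm_assoc[OF S])
  have f4: "\<forall>X\<in>st_carrier Q. \<forall>Y\<in>st_carrier Q. st_mul Q X Y = st_mul Q Y X"
  proof (intro ballI)
    fix X Y assume "X \<in> st_carrier Q" "Y \<in> st_carrier Q"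
    then obtain x y where xy: "x \<in> UC" "y \<in> UC" "X = cls x" "Y = cls y"
      unfolding Q_carrier by (auto elim!: Q_cases)
    show "st_mul Q X Y = st_mul Q Y X" using xy Q_mul sm_comm[OF S, of x y] by simp
  qed
  have f5: "\<forall>X\<in>st_carrier Q. st_mul Q (st_one Q) X = X"
    unfolding Q_carrier Q_one by (auto elim!: Q_cases simp: Q_mul sm sm_onel[OF S])
  have f6: "\<forall>X\<in>st_carrier Q. st_mul Q (st_zero Q) X = st_zero Q"
    unfolding Q_carrier Q_zero by (auto elim!: Q_cases simp: Q_mul sm sm_zerol[OF S])
  have f7: "st_mul Q (st_e Q) (st_e Q) = st_e Q"
    unfolding Q_e by (simp add: Q_mul sm sm_ee[OF S])
  have f8: "\<forall>X\<in>st_carrier Q. st_mul Q (st_e Q) X = st_zero Q \<longrightarrow> X = st_zero Q"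
  proof (intro ballI impI)
    fix X assume "X \<in> st_carrier Q" and h: "st_mul Q (st_e Q) X = st_zero Q"
    then obtain x where x: "x \<in> UC" and X: "X = cls x" unfolding Q_carrier by (auto elim!: Q_cases)
    have "cls (mm ue x) = cls (st_zero U)" using h unfolding X Q_e Q_zero using Q_mul x sm by simp
    hence "g (mm ue (mm ue x)) = bs_zero N" using Q_zero_iff sm x by auto
    hence "g (mm ue x) = bs_zero N" using ge_eq x by simp
    thus "X = st_zero Q" unfolding X Q_zero using Q_zero_iff x by auto
  qed
  have f9: "\<forall>X\<in>ghosts Q. st_le Q X X"
    unfolding Q_ghosts
  proof
    fix X assume "X \<in> cls ` UM" then obtain a where a: "a \<in> UM" "X = cls a" by auto
    have "bs_add N (g a) (g a) = g a" using N_facts(5)[OF g_C g_C, of a a] a by auto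
    thus "st_le Q X X" using Q_le a by simp
  qed
  have f10: "\<forall>X\<in>ghosts Q. \<forall>Y\<in>ghosts Q. st_le Q X Y \<and> st_le Q Y X \<longrightarrow> X = Y"
  proof (intro ballI impI)
    fix X Y assume "X \<in> ghosts Q" "Y \<in> ghosts Q" and h: "st_le Q X Y \<and> st_le Q Y X"
    then obtain a b where ab: "a \<in> UM" "b \<in> UM" "X = cls a" "Y = cls b"
      unfolding Q_ghosts by auto
    have 1: "bs_add N (g a) (g b) = g b" and 2: "bs_add N (g b) (g a) = g a" using h ab Q_le by auto
    have "g a = g b" using 1 2 N_add_comm[OF g_C g_C, of a b] ab by simp
    thus "X = Y" using gh_cls ab by simp
  qed
  have f11: "\<forall>X\<in>ghosts Q. \<forall>Y\<in>ghosts Q. \<forall>Z\<in>ghosts Q. st_le Q X Y \<and> st_le Q Y Z \<longrightarrow> st_le Q X Z"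
  proof (intro ballI impI)
    fix X Y Z assume "X \<in> ghosts Q" "Y \<in> ghosts Q" "Z \<in> ghosts Q" and h: "st_le Q X Y \<and> st_le Q Y Z"
    then obtain a b c where abc: "a \<in> UM" "b \<in> UM" "c \<in> UM" "X = cls a" "Y = cls b" "Z = cls c"
      unfolding Q_ghosts by auto
    have 1: "bs_add N (g a) (g b) = g b" and 2: "bs_add N (g b) (g c) = g c" using h abc Q_le by auto
    have "bs_add N (g a) (g c) = g c" using 1 2 N_facts(3) g_C abc by metis
    thus "st_le Q X Z" using abc Q_le by auto
  qed
  have f12: "\<forall>X\<in>ghosts Q. \<forall>Y\<in>ghosts Q. st_le Q X Y \<or> st_le Q Y X"
  proof (intro ballI)
    fix X Y assume "X \<in> ghosts Q" "Y \<in> ghosts Q"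
    then obtain a b where ab: "a \<in> UM" "b \<in> UM" "X = cls a" "Y = cls b"
      unfolding Q_ghosts by auto
    have C: "g a \<in> bs_carrier N" "g b \<in> bs_carrier N" using g_C ab by auto
    show "st_le Q X Y \<or> st_le Q Y X"
    proof (cases "bs_add N (g a) (g b) = g b")
      case True thus ?thesis using Q_le ab by simp
    next
      case False
      hence "bs_add N (g a) (g b) = g a" using N_facts(5)[OF C] by auto
      hence "bs_add N (g b) (g a) = g a" using N_add_comm[OF C] by simp
      thus ?thesis using Q_le ab by simp
    qed
  qed
  have f13: "\<forall>X\<in>ghosts Q. \<forall>Y\<in>ghosts Q. \<forall>Z\<in>ghosts Q. st_le Q X Y \<longrightarrow> st_le Q (st_mul Q X Z) (st_mul Q Y Z)"
  proof (intro ballI impI)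
    fix X Y Z assume "X \<in> ghosts Q" "Y \<in> ghosts Q" "Z \<in> ghosts Q" and h: "st_le Q X Y"
    then obtain a b c where abc: "a \<in> UM" "b \<in> UM" "c \<in> UM" "X = cls a" "Y = cls b" "Z = cls c"
      unfolding Q_ghosts by auto
    have 1: "bs_add N (g a) (g b) = g b" using h abc Q_le by auto
    have "bs_add N (g (mm a c)) (g (mm b c)) = g (mm b c)"
      using g_mul abc N_facts(6) g_C 1 by metis
    moreover have "mm a c \<in> UM" "mm b c \<in> UM" using abc sm by auto
    ultimately show "st_le Q (st_mul Q X Z) (st_mul Q Y Z)" using Q_le Q_mul abc sm by auto
  qed
  have f14: "\<forall>X\<in>ghosts Q. st_le Q (st_zero Q) X"
    unfolding Q_ghosts Q_zero using Q_le sm g_zero N_facts(4) g_C by auto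
  show ?thesis unfolding supertropical_monoid_def Let_def
    using f1 f2 f3 f4 f5 f6 f7 f8 f9 f10 f11 f12 f13 f14 by blast
qed

lemma Q_semiring: "supertropical_semiring Q"
proof -
  have a: "\<forall>X\<in>st_carrier Q. \<forall>Y\<in>st_carrier Q. \<forall>Z\<in>st_carrier Q.
        st_add Q (st_add Q X Y) Z = st_add Q X (st_add Q Y Z)"
    unfolding Q_carrier by (auto elim!: Q_cases simp: Q_add sm U_assoc)
  have d: "\<forall>X\<in>st_carrier Q. \<forall>Y\<in>st_carrier Q. \<forall>Z\<in>st_carrier Q.
        st_mul Q X (st_add Q Y Z) = st_add Q (st_mul Q X Y) (st_mul Q X Z)"
    unfolding Q_carrier by (auto elim!: Q_cases simp: Q_add Q_mul sm U_distr)
  show ?thesis unfolding supertropical_semiring_def using Q_mon a d by blast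
qed

lemma univ:
  fixes W :: "'n stm" and \<beta> :: "'a \<Rightarrow> 'n"
  assumes W: "supertropical_semiring W" and WN: "ghost_ideal_is W N"
    and hb: "st_semiring_hom U W \<beta>" and cb: "covers U W \<beta> g"
  shows "\<exists>\<eta>. st_semiring_hom Q W \<eta> \<and> covers Q W \<eta> (qiota U g) \<and>
            (\<forall>x\<in>UC. \<beta> x = \<eta> (proj H x)) \<and>
            (\<forall>\<eta>'. st_semiring_hom Q W \<eta>' \<and> covers Q W \<eta>' (qiota U g) \<and>
                   (\<forall>x\<in>UC. \<beta> x = \<eta>' (proj H x)) \<longrightarrow>
                   (\<forall>X\<in>st_carrier Q. \<eta>' X = \<eta> X))"
proof -
  have SW: "supertropical_monoid W" using W unfolding supertropical_semiring_def by auto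
  have bC: "x \<in> UC \<Longrightarrow> \<beta> x \<in> st_carrier W" for x using hb unfolding st_semiring_hom_def by auto
  have bmul: "x \<in> UC \<Longrightarrow> y \<in> UC \<Longrightarrow> \<beta> (mm x y) = st_mul W (\<beta> x) (\<beta> y)" for x y
    using hb unfolding st_semiring_hom_def by auto
  have badd: "x \<in> UC \<Longrightarrow> y \<in> UC \<Longrightarrow> \<beta> (st_add U x y) = st_add W (\<beta> x) (\<beta> y)" for x y
    using hb unfolding st_semiring_hom_def by auto
  have b0: "\<beta> (st_zero U) = st_zero W" and b1: "\<beta> (st_one U) = st_one W"
    using hb unfolding st_semiring_hom_def by auto
  have bgh: "a \<in> UM \<Longrightarrow> \<beta> a = g a \<and> \<beta> a \<in> ghosts W" for a using cb unfolding covers_def by auto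
  have be: "\<beta> ue = st_e W" using bgh[OF sm(10)] g_e WN unfolding ghost_ideal_is_def by auto
  have bex: "x \<in> UC \<Longrightarrow> st_mul W (st_e W) (\<beta> x) = g (mm ue x)" for x
    using bmul[of ue x] be bgh sm by auto
  have val: "\<beta> x = g (mm ue x)" if x: "x \<in> UM \<union> Sg" for x
  proof (cases "x \<in> UM")
    case True thus ?thesis using bgh sm_ghe[OF S] by simp
  next
    case False
    with x obtain a where xC: "x \<in> UC" and a: "a \<in> UM" and le: "st_le U a (mm ue x)"
      and ne: "a \<noteq> mm ue x" and ga: "g a = g (mm ue x)"
      unfolding Sigma0_def by auto
    have "\<beta> x = st_add W (\<beta> x) (\<beta> a)" using badd[OF xC] sig_wit[OF xC a le ne] sm a by metis
    also have "\<dots> = st_mul W (st_e W) (\<beta> x)"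
    proof (rule sm_add_eq[OF SW])
      show "\<beta> x \<in> st_carrier W" "\<beta> a \<in> st_carrier W" using bC xC a sm by auto
      show "st_mul W (st_e W) (\<beta> x) = st_mul W (st_e W) (\<beta> a)"
        using bex[OF xC] bex[of a] a sm sm_ghe[OF S] ga by auto
    qed
    also have "\<dots> = g (mm ue x)" using bex xC by simp
    finally show ?thesis .
  qed
  have zer: "\<beta> x = st_zero W" if x: "x \<in> UC" and z: "g (mm ue x) = bs_zero N" for x
    using sm_ez[OF SW, of "\<beta> x"] bC x bex z WN unfolding ghost_ideal_is_def by auto
  have const: "\<beta> x1 = \<beta> x2" if h: "(x1, x2) \<in> H" for x1 x2
    using h H_iff val zer by metis
  define \<eta> where "\<eta> X = \<beta> (SOME x. x \<in> X)" for X
  have ec: "x \<in> UC \<Longrightarrow> \<eta> (cls x) = \<beta> x" for x unfolding \<eta>_def using rep const by metis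
  have hom: "st_semiring_hom Q W \<eta>"
    unfolding st_semiring_hom_def Q_carrier Q_zero Q_one
    by (auto elim!: Q_cases simp: Q_add Q_mul sm ec bC b0 b1 bmul badd)
  have cov: "covers Q W \<eta> (qiota U g)"
    unfolding covers_def Q_ghosts
  proof
    fix X assume "X \<in> cls ` UM" then obtain a where a: "a \<in> UM" "X = cls a" by auto
    have "\<eta> X = \<beta> a" using ec a sm by simp
    thus "\<eta> X \<in> ghosts W \<and> \<eta> X = qiota U g X" using bgh[OF a(1)] iota_cls[OF a(1)] a(2) by metis
  qed
  have fac: "\<forall>x\<in>UC. \<beta> x = \<eta> (proj H x)" unfolding proj_def using ec by auto
  have uniq: "\<forall>\<eta>'. st_semiring_hom Q W \<eta>' \<and> covers Q W \<eta>' (qiota U g) \<and>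
                   (\<forall>x\<in>UC. \<beta> x = \<eta>' (proj H x)) \<longrightarrow>
                   (\<forall>X\<in>st_carrier Q. \<eta>' X = \<eta> X)"
    unfolding Q_carrier proj_def by (auto elim!: Q_cases simp: ec)
  show ?thesis using hom cov fac uniq by blast
qed

lemma main:
  "supertropical_semiring Q \<and>
    bij_betw (qiota U g) (ghosts Q) (bs_carrier N) \<and>
    (\<forall>X\<in>ghosts Q. \<forall>Y\<in>ghosts Q.
        qiota U g (st_mul Q X Y) = bs_mul N (qiota U g X) (qiota U g Y) \<and>
        qiota U g (st_add Q X Y) = bs_add N (qiota U g X) (qiota U g Y)) \<and>
    st_semiring_hom U Q (proj H) \<and>
    (\<forall>x\<in>ghosts U. proj H x \<in> ghosts Q \<and> qiota U g (proj H x) = g x)"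
proof -
  have bij: "bij_betw (qiota U g) (ghosts Q) (bs_carrier N)"
    unfolding bij_betw_def Q_ghosts
  proof
    show "inj_on (qiota U g) (cls ` UM)"
    proof (rule inj_onI)
      fix X Y assume "X \<in> cls ` UM" "Y \<in> cls ` UM" and h: "qiota U g X = qiota U g Y"
      then obtain a b where ab: "a \<in> UM" "b \<in> UM" "X = cls a" "Y = cls b" by auto
      have "g a = g b" using h ab iota_cls by simp
      thus "X = Y" using gh_cls[OF ab(1,2)] ab(3,4) by simp
    qed
    have "qiota U g ` cls ` UM = g ` UM" using iota_cls by (auto simp: image_image)
    thus "qiota U g ` cls ` UM = bs_carrier N" using gsurj by simp
  qed
  have ops: "\<forall>X\<in>ghosts Q. \<forall>Y\<in>ghosts Q.
        qiota U g (st_mul Q X Y) = bs_mul N (qiota U g X) (qiota U g Y) \<and>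
        qiota U g (st_add Q X Y) = bs_add N (qiota U g X) (qiota U g Y)"
    unfolding Q_ghosts using Q_mul Q_add iota_cls g_mul g_add sm by auto
  have hom: "st_semiring_hom U Q (proj H)"
    unfolding st_semiring_hom_def proj_def Q_carrier Q_zero Q_one
    using cls_in Q_mul Q_add by auto
  have cov: "\<forall>x\<in>ghosts U. proj H x \<in> ghosts Q \<and> qiota U g (proj H x) = g x"
    unfolding proj_def Q_ghosts using iota_cls by auto
  show ?thesis using Q_semiring bij ops hom cov by blast
qed

end

theorem theorem5p13:
  fixes U :: "'a stm" and N :: "'n bsr" and \<gamma> :: "'a \<Rightarrow> 'n"
  assumes "supertropical_semiring U"
    and "bipotent_semiring N"
    and "ghost_hom U N \<gamma>"
    and "\<gamma> ` ghosts U = bs_carrier N"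
  defines "H \<equiv> Hrel U N \<gamma>"
    and "Q \<equiv> quot_stm U (Hrel U N \<gamma>)"
    and "\<iota> \<equiv> qiota U \<gamma>"
  shows "supertropical_semiring Q \<and>
    bij_betw \<iota> (ghosts Q) (bs_carrier N) \<and>
    (\<forall>X\<in>ghosts Q. \<forall>Y\<in>ghosts Q.
        \<iota> (st_mul Q X Y) = bs_mul N (\<iota> X) (\<iota> Y) \<and>
        \<iota> (st_add Q X Y) = bs_add N (\<iota> X) (\<iota> Y)) \<and>
    st_semiring_hom U Q (proj H) \<and>
    (\<forall>x\<in>ghosts U. proj H x \<in> ghosts Q \<and> \<iota> (proj H x) = \<gamma> x) \<and>
    (\<forall>(W :: 'n stm) \<beta>.
       supertropical_semiring W \<and> ghost_ideal_is W N \<and>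
       st_semiring_hom U W \<beta> \<and> covers U W \<beta> \<gamma> \<longrightarrow>
       (\<exists>\<eta>. st_semiring_hom Q W \<eta> \<and> covers Q W \<eta> \<iota> \<and>
            (\<forall>x\<in>st_carrier U. \<beta> x = \<eta> (proj H x)) \<and>
            (\<forall>\<eta>'. st_semiring_hom Q W \<eta>' \<and> covers Q W \<eta>' \<iota> \<and>
                   (\<forall>x\<in>st_carrier U. \<beta> x = \<eta>' (proj H x)) \<longrightarrow>
                   (\<forall>X\<in>st_carrier Q. \<eta>' X = \<eta> X))))"
proof -
  interpret ctx U N \<gamma> using assms(1-4) by unfold_locales
  show ?thesis unfolding H_def Q_def \<iota>_def using main univ by blast
qed

end
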